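(* There exist a real $3\times 3$ matrix $A$ and a real $1\times 3$ matrix $B$ such that the non-termination set $\mathrm{NT}=\{\vec{x}\in\mathbb{R}^3: BA^k\vec{x}\ge 0 \text{ for all integers } k\ge 0\}$ of the loop "while $(B\vec{x}\ge 0)$ $\{\vec{x}:=A\vec{x}\}$" is not a semi-algebraic set. In particular, non-termination sets of homogeneous simple linear loops with more than two variables cannot in general be defined by Tarski formulae.
   Context: A semi-algebraic subset of $\mathbb{R}^n$ is a set of the form $\bigcup_{i=1}^s\bigcap_{j=1}^{r_i}\{\vec{x}\in\mathbb{R}^n: f_{i,j}(\vec{x})\,\triangleleft_{i,j}\,0\}$ with finitely many polynomials $f_{i,j}\in\mathbb{R}[x_1,\dots,x_n]$ and $\triangleleft_{i,j}\in\{<,=\}$; these are exactly the sets definable by Tarski formulae (Boolean combinations of polynomial equalities and inequalities). *)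

theory Defs
  imports "HOL-Analysis.Analysis"
begin

text \<open>Polynomial functions on real^'n (with real coefficients): the smallest class
  containing the constants and coordinate functions, closed under + and *.
  These are exactly the evaluation maps of polynomials in R[x_1,...,x_n].\<close>
inductive poly_fun :: "(real^'n \<Rightarrow> real) \<Rightarrow> bool" where
  const: "poly_fun (\<lambda>x. c)"
| coord: "poly_fun (\<lambda>x. x $ i)"
| add: "poly_fun f \<Longrightarrow> poly_fun g \<Longrightarrow> poly_fun (\<lambda>x. f x + g x)"
| mult: "poly_fun f \<Longrightarrow> poly_fun g \<Longrightarrow> poly_fun (\<lambda>x. f x * g x)"

text \<open>Semi-algebraic set: finite union (i < s) of finite intersections (j < r i)
  of sets {f_ij < 0} (if lt i j) or {f_ij = 0} (otherwise).\<close>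
definition semialgebraic :: "(real^'n) set \<Rightarrow> bool" where
  "semialgebraic S \<longleftrightarrow>
     (\<exists>(s::nat) (r::nat \<Rightarrow> nat) (f::nat \<Rightarrow> nat \<Rightarrow> real^'n \<Rightarrow> real) (lt::nat \<Rightarrow> nat \<Rightarrow> bool).
        (\<forall>i<s. \<forall>j<r i. poly_fun (f i j)) \<and>
        S = (\<Union>i<s. \<Inter>j<r i. {x. if lt i j then f i j x < 0 else f i j x = 0}))"

text \<open>Non-termination set of the loop  while (B x >= 0) { x := A x }.\<close>
definition NT :: "real^'n^'n \<Rightarrow> real^'n^'m \<Rightarrow> (real^'n) set" where
  "NT A B = {x. \<forall>k::nat. \<forall>i. (B *v (((*v) A ^^ k) x)) $ i \<ge> 0}"

end

theory Submission
  imports Defs "HOL-Computational_Algebra.Polynomial"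
begin

definition good :: "real set \<Rightarrow> bool" where
  "good S \<longleftrightarrow> (\<exists>F. finite F \<and> (\<forall>a b. a \<le> b \<longrightarrow> {a..b} \<inter> F = {} \<longrightarrow> (a \<in> S \<longleftrightarrow> b \<in> S)))"

lemma good_Un: "good A \<Longrightarrow> good B \<Longrightarrow> good (A \<union> B)"
  unfolding good_def
  apply (elim exE conjE)
  subgoal for F G by (rule exI[of _ "F \<union> G"]) blast
  done

lemma good_Int: "good A \<Longrightarrow> good B \<Longrightarrow> good (A \<inter> B)"
  unfolding good_def
  apply (elim exE conjE)
  subgoal for F G by (rule exI[of _ "F \<union> G"]) blast
  done

lemma good_UNIV: "good UNIV" unfolding good_def by blast
lemma good_empty: "good {}" unfolding good_def by blast

lemma good_Inter: "(\<And>j. j < (r::nat) \<Longrightarrow> good (S j)) \<Longrightarrow> good (\<Inter>j<r. S j)"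
proof (induction r)
  case 0 then show ?case by (simp add: good_UNIV)
next
  case (Suc r)
  have "(\<Inter>j<Suc r. S j) = S r \<inter> (\<Inter>j<r. S j)" by (simp add: lessThan_Suc)
  then show ?case using Suc by (simp add: good_Int)
qed

lemma good_Union: "(\<And>j. j < (r::nat) \<Longrightarrow> good (S j)) \<Longrightarrow> good (\<Union>j<r. S j)"
proof (induction r)
  case 0 then show ?case by (simp add: good_empty)
next
  case (Suc r)
  have "(\<Union>j<Suc r. S j) = S r \<union> (\<Union>j<r. S j)" by (simp add: lessThan_Suc)
  then show ?case using Suc by (simp add: good_Un)
qed

lemma good_lt: "good {t. poly p t < (0::real)}"
proof (cases "p = 0")
  case True then show ?thesis by (simp add: good_empty)
next
  case False
  show ?thesis unfolding good_def
  proof (intro exI conjI allI impI)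
    show "finite {t. poly p t = 0}" using poly_roots_finite[OF False] .
    fix a b :: real assume ab: "a \<le> b" and F: "{a..b} \<inter> {t. poly p t = 0} = {}"
    have na: "poly p a \<noteq> 0" and nb: "poly p b \<noteq> 0" using F ab by auto
    show "a \<in> {t. poly p t < 0} \<longleftrightarrow> b \<in> {t. poly p t < 0}"
    proof (cases "a = b")
      case True then show ?thesis by simp
    next
      case False
      then have "a < b" using ab by simp
      have nr: "\<not> (\<exists>x>a. x < b \<and> poly p x = 0)"
        using F by (metis (mono_tags) IntI atLeastAtMost_iff empty_iff less_imp_le mem_Collect_eq)
      show ?thesis
      proof
        assume "a \<in> {t. poly p t < 0}"
        then show "b \<in> {t. poly p t < 0}" using nb nr poly_IVT_pos[of a b p] \<open>a < b\<close> by force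
      next
        assume "b \<in> {t. poly p t < 0}"
        then show "a \<in> {t. poly p t < 0}" using na nr poly_IVT_neg[of a b p] \<open>a < b\<close> by force
      qed
    qed
  qed
qed

lemma good_eq: "good {t. poly p t = (0::real)}"
proof (cases "p = 0")
  case True then show ?thesis by (simp add: good_UNIV)
next
  case False
  show ?thesis unfolding good_def
  proof (intro exI conjI allI impI)
    show "finite {t. poly p t = 0}" using poly_roots_finite[OF False] .
    fix a b :: real assume ab: "a \<le> b" and F: "{a..b} \<inter> {t. poly p t = 0} = {}"
    then show "a \<in> {t. poly p t = 0} \<longleftrightarrow> b \<in> {t. poly p t = 0}" by auto
  qed
qed

lemma poly_fun_curve:
  assumes "poly_fun f" and "\<And>i. \<exists>p. \<forall>t. \<gamma> t $ i = poly p t"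
  shows "\<exists>p. \<forall>t. f (\<gamma> t) = poly p t"
  using assms(1)
proof induction
  case (const c) show ?case by (rule exI[of _ "[:c:]"]) simp
next
  case (coord i) show ?case using assms(2)[of i] by simp
next
  case (add f g)
  then obtain p q where "\<forall>t. f (\<gamma> t) = poly p t" "\<forall>t. g (\<gamma> t) = poly q t" by blast
  then show ?case by (intro exI[of _ "p + q"]) simp
next
  case (mult f g)
  then obtain p q where "\<forall>t. f (\<gamma> t) = poly p t" "\<forall>t. g (\<gamma> t) = poly q t" by blast
  then show ?case by (intro exI[of _ "p * q"]) simp
qed

definition Am :: "real^3^3" where
  "Am = vector [vector [1,1,1], vector [0,1,2], vector [0,0,1]]"
definition Bm :: "real^3^1" where
  "Bm = vector [vector [1,0,0]]"

lemma Am_pow: "((*v) Am ^^ k) x = vector [x$3 * (real k)^2 + x$2 * real k + x$1, x$2 + 2 * x$3 * real k, x$3]"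
proof (induction k)
  case 0 then show ?case
    by (simp add: vec_eq_iff forall_3)
next
  case (Suc k)
  have "((*v) Am ^^ Suc k) x = Am *v ((*v) Am ^^ k) x" by simp
  also have "\<dots> = Am *v vector [x$3 * (real k)^2 + x$2 * real k + x$1, x$2 + 2 * x$3 * real k, x$3]"
    using Suc by simp
  also have "\<dots> = vector [x$3 * (real (Suc k))^2 + x$2 * real (Suc k) + x$1, x$2 + 2 * x$3 * real (Suc k), x$3]"
    by (simp add: vec_eq_iff forall_3 Am_def matrix_vector_mult_def sum_3 algebra_simps power2_eq_square)
  finally show ?case .
qed

lemma NT_eq: "NT Am Bm = {x. \<forall>k::nat. x$3 * (real k)^2 + x$2 * real k + x$1 \<ge> 0}"
  unfolding NT_def by (simp add: Am_pow Bm_def matrix_vector_mult_def sum_3)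

definition gam :: "real \<Rightarrow> real^3" where
  "gam t = vector [t^2 - 1/16, -2*t, 1]"

lemma gam_poly: "\<exists>p. \<forall>t. gam t $ i = poly p t"
proof -
  have "i = 1 \<or> i = 2 \<or> i = 3" using exhaust_3 by blast
  then show ?thesis
  proof (elim disjE)
    assume "i = 1" then show ?thesis
      by (intro exI[of _ "[:-1/16, 0, 1:]"]) (simp add: gam_def power2_eq_square)
  next
    assume "i = 2" then show ?thesis
      by (intro exI[of _ "[:0, -2:]"]) (simp add: gam_def)
  next
    assume "i = 3" then show ?thesis
      by (intro exI[of _ "[:1:]"]) (simp add: gam_def)
  qed
qed

lemma trace_eq: "{t. gam t \<in> NT Am Bm} = {t. \<forall>k::nat. (real k - t)^2 \<ge> 1/16}"
  unfolding NT_eq by (simp add: gam_def power2_eq_square algebra_simps)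

lemma semi_good:
  assumes "semialgebraic S" shows "good {t. gam t \<in> S}"
proof -
  from assms obtain s :: nat and r :: "nat \<Rightarrow> nat" and f :: "nat \<Rightarrow> nat \<Rightarrow> real^3 \<Rightarrow> real"
    and lt :: "nat \<Rightarrow> nat \<Rightarrow> bool" where P: "\<forall>i<s. \<forall>j<r i. poly_fun (f i j)"
    and S: "S = (\<Union>i<s. \<Inter>j<r i. {x. if lt i j then f i j x < 0 else f i j x = 0})"
    unfolding semialgebraic_def by blast
  have "{t. gam t \<in> S} = (\<Union>i<s. \<Inter>j<r i. {t. if lt i j then f i j (gam t) < 0 else f i j (gam t) = 0})"
    using S by auto
  also have "good \<dots>"
  proof (rule good_Union, rule good_Inter)
    fix i j assume "i < s" "j < r i"
    then obtain p where p: "\<forall>t. f i j (gam t) = poly p t"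
      using poly_fun_curve[of "f i j" gam] P gam_poly by blast
    show "good {t. if lt i j then f i j (gam t) < 0 else f i j (gam t) = 0}"
      using good_lt[of p] good_eq[of p] p by (cases "lt i j") simp_all
  qed
  finally show ?thesis .
qed

lemma trace_not_good: "\<not> good {t. \<forall>k::nat. (real k - t)^2 \<ge> 1/16}"
proof
  assume "good {t. \<forall>k::nat. (real k - t)^2 \<ge> 1/16}"
  then obtain F where F: "finite F"
    and H: "\<And>a b. a \<le> b \<Longrightarrow> {a..b} \<inter> F = {} \<Longrightarrow>
       (a \<in> {t. \<forall>k::nat. (real k - t)^2 \<ge> 1/16} \<longleftrightarrow> b \<in> {t. \<forall>k::nat. (real k - t)^2 \<ge> 1/16})"
    unfolding good_def by blast
  define M where "M = Max (insert 0 F)"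
  have M: "\<forall>x\<in>F. x \<le> M" using F unfolding M_def by simp
  have M0: "0 \<le> M" using F unfolding M_def by simp
  define n :: nat where "n = nat \<lceil>M\<rceil> + 1"
  have nM: "real n > M" unfolding n_def using M0 by linarith
  let ?a = "real n + 1/8" and ?b = "real n + 1/4"
  have "{?a..?b} \<inter> F = {}" using M nM by force
  then have iff: "?a \<in> {t. \<forall>k::nat. (real k - t)^2 \<ge> 1/16} \<longleftrightarrow> ?b \<in> {t. \<forall>k::nat. (real k - t)^2 \<ge> 1/16}"
    by (intro H) auto
  have "\<forall>k::nat. (real k - ?b)^2 \<ge> 1/16"
  proof
    fix k :: nat
    show "(real k - ?b)^2 \<ge> 1/16"
    proof (cases "k \<le> n")
      case True
      then have "real k \<le> real n" by simp
      then have "?b - real k \<ge> 1/4" by simp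
      then have "(1/4)^2 \<le> (?b - real k)^2" by (intro power_mono) auto
      moreover have "(1/4::real)^2 = 1/16" by (simp add: power2_eq_square)
      ultimately show ?thesis by (simp add: power2_commute)
    next
      case False
      then have "real k \<ge> real n + 1" by simp
      then have "real k - ?b \<ge> 1/4" by simp
      then have "(1/4)^2 \<le> (real k - ?b)^2" by (intro power_mono) auto
      moreover have "(1/4::real)^2 = 1/16" by (simp add: power2_eq_square)
      ultimately show ?thesis by linarith
    qed
  qed
  moreover have "(real n - ?a)^2 < 1/16" by (simp add: power2_eq_square)
  ultimately have "\<forall>k::nat. (real k - ?a)^2 \<ge> 1/16" using iff by simp
  then have "(real n - ?a)^2 \<ge> 1/16" by blast
  moreover have "(real n - ?a)^2 < 1/16" by (simp add: power2_eq_square)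
  ultimately show False by linarith
qed

theorem theorem2:
  shows "\<exists>(A::real^3^3) (B::real^3^1). \<not> semialgebraic (NT A B)"
  using semi_good[of "NT Am Bm"] trace_eq trace_not_good by auto

end
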